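(* Let $\widehat{\mathcal H}=\mathcal H^{even}\oplus\mathcal H^{odd}$ be a $\mathbb Z_2$-graded Hilbert space with grading operator $\epsilon=\begin{pmatrix}1&0\\0&-1\end{pmatrix}$, and let $\omega$ be a unitary element of the $C^*$-algebra $C^*(\mathbf 1,\epsilon)\subseteq\mathcal B(\widehat{\mathcal H})$ generated by the identity and $\epsilon$. For $x\in\mathcal B(\widehat{\mathcal H})$ put $x^{\omega}:=\omega\,\overline{x}\,\omega$, where $\overline x$ denotes the ordinary Hilbert space adjoint of $x$; call $x$ $\omega$-hermitian if $x^\omega=x$. Then $x$ is $\omega$-hermitian with $\Vert x\Vert\le 1$ if and only if $$\Vert x-it\,\omega\Vert\le\sqrt{1+t^2}\quad\text{for every } t\in\mathbb R.$$
   Context: $C^*(\mathbf 1,\epsilon)\cong\mathbb C\oplus\mathbb C$, so a unitary $\omega$ in it has the form $\omega=\begin{pmatrix}\omega_0&0\\0&\omega_1\end{pmatrix}$ with $\omega_0,\omega_1$ complex numbers of modulus one (times the identity on the respective summand). *)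

theory Defs
  imports "HOL-Analysis.Analysis"
begin

text \<open>A complex Hilbert space is modelled as a real Hilbert space (type class real_inner
  plus completeness) together with an orthogonal complex structure J (multiplication by i).
  The complex inner product is then x \<bullet> y + i (x \<bullet> J y) (up to convention), and the
  norm is the same.\<close>

definition complex_structure :: "('h::real_inner \<Rightarrow> 'h) \<Rightarrow> bool" where
  "complex_structure J \<longleftrightarrow> bounded_linear J \<and> (\<forall>v. J (J v) = - v) \<and> (\<forall>v w. J v \<bullet> J w = v \<bullet> w)"

definition cscale :: "('h::real_inner \<Rightarrow> 'h) \<Rightarrow> complex \<Rightarrow> 'h \<Rightarrow> 'h" where
  "cscale J c v = Re c *\<^sub>R v + Im c *\<^sub>R J v"

text \<open>Elements of B(H): bounded complex-linear operators.\<close>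
definition bounded_op :: "('h::real_inner \<Rightarrow> 'h) \<Rightarrow> ('h \<Rightarrow> 'h) \<Rightarrow> bool" where
  "bounded_op J f \<longleftrightarrow> bounded_linear f \<and> (\<forall>v. f (J v) = J (f v))"

text \<open>A Z2-grading H = H_even (+) H_odd with grading operator eps = diag(1,-1):
  eps is a bounded complex-linear self-adjoint involution (H_even, H_odd are its
  +1 / -1 eigenspaces, which are orthogonal complementary closed subspaces).\<close>
definition grading_op :: "('h::real_inner \<Rightarrow> 'h) \<Rightarrow> ('h \<Rightarrow> 'h) \<Rightarrow> bool" where
  "grading_op J e \<longleftrightarrow> bounded_op J e \<and> (\<forall>v. e (e v) = v) \<and> adjoint e = e"

text \<open>The C*-algebra C*(1, eps) generated by the identity and eps; since eps is a
  self-adjoint involution it is the (closed, finite-dimensional) span of 1 and eps.\<close>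
definition cstar_one_eps :: "('h::real_inner \<Rightarrow> 'h) \<Rightarrow> ('h \<Rightarrow> 'h) \<Rightarrow> ('h \<Rightarrow> 'h) set" where
  "cstar_one_eps J e = {(\<lambda>v. cscale J a v + cscale J b (e v)) | a b. True}"

definition unitary_op :: "('h::real_inner \<Rightarrow> 'h) \<Rightarrow> ('h \<Rightarrow> 'h) \<Rightarrow> bool" where
  "unitary_op J u \<longleftrightarrow> bounded_op J u \<and> adjoint u \<circ> u = id \<and> u \<circ> adjoint u = id"

definition omega_adj :: "('h::real_inner \<Rightarrow> 'h) \<Rightarrow> ('h \<Rightarrow> 'h) \<Rightarrow> ('h \<Rightarrow> 'h)" where
  "omega_adj w x = w \<circ> adjoint x \<circ> w"

definition omega_hermitian :: "('h::real_inner \<Rightarrow> 'h) \<Rightarrow> ('h \<Rightarrow> 'h) \<Rightarrow> bool" where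
  "omega_hermitian w x \<longleftrightarrow> omega_adj w x = x"

end

theory Submission
  imports Defs
begin


lemma mid_ident:
  fixes a b :: "'h::real_inner"
  shows "(norm (a - b))^2 = 2*(norm a)^2 + 2*(norm b)^2 - 4 * (norm ((1/2) *\<^sub>R (a+b)))^2"
  by (simp add: power2_norm_eq_inner inner_diff inner_add inner_commute algebra_simps)

lemma aux: fixes N c :: real assumes "0 \<le> N" "c \<noteq> 0"
  shows "(-c/(N+1)) * c + (-c/(N+1))^2 * N/2 < 0"
proof -
  define D where "D = N + 1"
  have D: "D > 0" "N = D - 1" using assms by (simp_all add: D_def)
  have "(-c/D) * c + (-c/D)^2 * (D-1)/2 = - (c^2 * (D+1)) / (2*D^2)"
    using D by (simp add: field_simps power2_eq_square)
  also have "\<dots> < 0"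
  proof -
    have "c^2 > 0" using assms by simp
    hence "c^2 * (D+1) > 0" using D by simp
    moreover have "2*D^2 > 0" using D by simp
    ultimately show ?thesis by simp
  qed
  finally show ?thesis using D unfolding D_def by simp
qed

lemma riesz:
  fixes \<phi> :: "'h::{real_inner,complete_space} \<Rightarrow> real"
  assumes bl: "bounded_linear \<phi>"
  shows "\<exists>z. \<forall>v. \<phi> v = v \<bullet> z"
proof -
  interpret bounded_linear \<phi> by fact
  obtain C where C: "C > 0" "\<And>v. norm (\<phi> v) \<le> norm v * C" using pos_bounded by blast
  define F where "F v = (norm v)^2/2 - \<phi> v" for v
  have Fb: "- (C^2/2) \<le> F v" for v
  proof -
    have "\<phi> v \<le> norm v * C" using C(2)[of v] by simp
    moreover have "0 \<le> (norm v - C)^2" by simp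
    ultimately show ?thesis unfolding F_def by (simp add: power2_eq_square algebra_simps)
  qed
  define m where "m = Inf (range F)"
  have bdd: "bdd_below (range F)" by (rule bdd_belowI[where m="- (C^2/2)"]) (use Fb in auto)
  have mle: "m \<le> F y" for y unfolding m_def using bdd by (simp add: cInf_lower)
  have "\<exists>v. F v < m + inverse (real (Suc n))" for n
  proof -
    have "Inf (range F) < m + inverse (real (Suc n))" unfolding m_def by simp
    from cInf_lessD[OF _ this] show ?thesis by auto
  qed
  then obtain s where s: "\<And>n. F (s n) < m + inverse (real (Suc n))" by metis
  have key: "(norm (a - b))^2 \<le> 4 * (F a + F b - 2*m)" for a b
  proof -
    have "(norm (a - b))^2 = 4 * (F a + F b - 2 * F ((1/2) *\<^sub>R (a+b)))"
      unfolding F_def mid_ident by (simp add: scale add algebra_simps)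
    with mle[of "(1/2) *\<^sub>R (a+b)"] show ?thesis by simp
  qed
  have "Cauchy s"
  proof (rule CauchyI)
    fix e :: real assume e: "0 < e"
    obtain N :: nat where N: "8 / e^2 < real N" using reals_Archimedean2 by blast
    have "\<forall>a\<ge>N. \<forall>b\<ge>N. norm (s a - s b) < e"
    proof (intro allI impI)
      fix a b assume ab: "N \<le> a" "N \<le> b"
      have ia: "inverse (real (Suc a)) \<le> inverse (real (Suc N))" using ab by (simp add: field_simps)
      have ib: "inverse (real (Suc b)) \<le> inverse (real (Suc N))" using ab by (simp add: field_simps)
      have "(norm (s a - s b))^2 < 4 * (inverse (real (Suc a)) + inverse (real (Suc b)))"
        using key[of "s a" "s b"] s[of a] s[of b] by (smt (verit))
      also have "\<dots> \<le> 8 * inverse (real (Suc N))" using ia ib by (smt (verit))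
      also have "\<dots> < e^2"
      proof -
        have "8 / e^2 < real (Suc N)" using N by simp
        hence "8 < e^2 * real (Suc N)" using e by (simp add: field_simps)
        thus ?thesis by (simp add: field_simps)
      qed
      finally have "(norm (s a - s b))^2 < e^2" .
      thus "norm (s a - s b) < e" using e by (simp add: power_less_imp_less_base)
    qed
    thus "\<exists>M. \<forall>a\<ge>M. \<forall>b\<ge>M. norm (s a - s b) < e" by blast
  qed
  then obtain z where z: "s \<longlonglongrightarrow> z" using Cauchy_convergent convergent_def by blast
  have t1: "(\<lambda>n. F (s n)) \<longlonglongrightarrow> F z" unfolding F_def
    by (intro tendsto_intros z tendsto) auto
  have t2: "(\<lambda>n. F (s n)) \<longlonglongrightarrow> m"
  proof (rule real_tendsto_sandwich[where f="\<lambda>n. m" and h="\<lambda>n. m + inverse (real (Suc n))"])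
    show "\<forall>\<^sub>F n in sequentially. m \<le> F (s n)" using mle by simp
    show "\<forall>\<^sub>F n in sequentially. F (s n) \<le> m + inverse (real (Suc n))" using s by (simp add: less_imp_le)
  qed (auto simp del: of_nat_Suc intro: LIMSEQ_inverse_real_of_nat_add)
  have Fz: "F z \<le> F y" for y using LIMSEQ_unique[OF t1 t2] mle by simp
  show ?thesis
  proof (rule exI, rule allI)
    fix v
    define c where "c = z \<bullet> v - \<phi> v"
    define N where "N = (norm v)^2"
    have g: "0 \<le> t * c + t^2 * N / 2" for t
    proof -
      have "F z \<le> F (z + t *\<^sub>R v)" by (rule Fz)
      moreover have "(norm (z + t *\<^sub>R v))^2 = (norm z)^2 + 2*t*(z \<bullet> v) + t^2*(norm v)^2"
        by (simp only: power2_norm_eq_inner) (simp add: inner_add inner_commute algebra_simps power2_eq_square)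
      ultimately show ?thesis unfolding F_def c_def N_def
        by (simp add: add scale algebra_simps)
    qed
    have "c = 0"
    proof (rule ccontr)
      assume "c \<noteq> 0"
      have N0: "0 \<le> N" unfolding N_def by simp
      from aux[OF N0 \<open>c \<noteq> 0\<close>] g[of "-c/(N+1)"] show False by simp
    qed
    thus "\<phi> v = v \<bullet> z" unfolding c_def by (simp add: inner_commute)
  qed
qed



lemma core:
  fixes J h :: "'h::real_inner \<Rightarrow> 'h"
  assumes lJ: "linear J" and JJ: "\<And>v. J (J v) = - v" and Jo: "\<And>u v. J u \<bullet> J v = u \<bullet> v"
    and lh: "linear h" and hJ: "\<And>v. h (J v) = J (h v)"
  shows "((\<forall>u v. h u \<bullet> v = u \<bullet> h v) \<and> (\<forall>v. norm (h v) \<le> norm v)) \<longleftrightarrow>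
         (\<forall>t v. norm (h v - t *\<^sub>R J v) \<le> sqrt (1 + t^2) * norm v)"
proof -
  interpret J: linear J by fact
  interpret h: linear h by fact
  have Jl: "J a \<bullet> b = - (a \<bullet> J b)" for a b
  proof -
    have "J a \<bullet> b = J (J a) \<bullet> J b" by (simp add: Jo)
    thus ?thesis by (simp add: JJ)
  qed
  have nJ: "J v \<bullet> J v = v \<bullet> v" for v by (simp add: Jo)
  have expand: "(norm (h v - t *\<^sub>R J v))^2 = (norm (h v))^2 - 2*t*(h v \<bullet> J v) + t^2 * (norm v)^2" for v t
    by (simp only: power2_norm_eq_inner) (simp add: inner_diff inner_commute nJ algebra_simps power2_eq_square)
  have sq: "norm a \<le> sqrt (1 + t^2) * norm v \<longleftrightarrow> (norm a)^2 \<le> (1 + t^2) * (norm v)^2" for a v and t :: real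
  proof -
    have y0: "0 \<le> sqrt (1 + t^2) * norm v" by simp
    have y2: "(sqrt (1 + t^2) * norm v)^2 = (1 + t^2) * (norm v)^2"
      by (simp add: power_mult_distrib)
    show ?thesis
    proof
      assume "norm a \<le> sqrt (1 + t^2) * norm v"
      hence "(norm a)^2 \<le> (sqrt (1 + t^2) * norm v)^2" by (intro power_mono) simp_all
      thus "(norm a)^2 \<le> (1 + t^2) * (norm v)^2" by (simp only: y2)
    next
      assume "(norm a)^2 \<le> (1 + t^2) * (norm v)^2"
      hence "(norm a)^2 \<le> (sqrt (1 + t^2) * norm v)^2" by (simp only: y2)
      thus "norm a \<le> sqrt (1 + t^2) * norm v" using y0 by (rule power2_le_imp_le)
    qed
  qed
  show ?thesis
  proof
    assume L: "(\<forall>u v. h u \<bullet> v = u \<bullet> h v) \<and> (\<forall>v. norm (h v) \<le> norm v)"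
    show "\<forall>t v. norm (h v - t *\<^sub>R J v) \<le> sqrt (1 + t^2) * norm v"
    proof (intro allI)
      fix t v
      have "h v \<bullet> J v = v \<bullet> h (J v)" using L by blast
      also have "\<dots> = J (h v) \<bullet> v" by (simp add: hJ inner_commute)
      also have "\<dots> = - (h v \<bullet> J v)" by (simp add: Jl)
      finally have c0: "h v \<bullet> J v = 0" by simp
      have "(norm (h v))^2 \<le> (norm v)^2" using L by (simp add: power_mono)
      hence "(norm (h v - t *\<^sub>R J v))^2 \<le> (1 + t^2) * (norm v)^2"
        unfolding expand c0 by (simp add: algebra_simps)
      thus "norm (h v - t *\<^sub>R J v) \<le> sqrt (1 + t^2) * norm v" using sq by blast
    qed
  next
    assume R: "\<forall>t v. norm (h v - t *\<^sub>R J v) \<le> sqrt (1 + t^2) * norm v"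
    have R2: "(norm (h v))^2 - 2*t*(h v \<bullet> J v) + t^2 * (norm v)^2 \<le> (1 + t^2) * (norm v)^2" for t v
    proof -
      have "(norm (h v - t *\<^sub>R J v))^2 \<le> (1 + t^2) * (norm v)^2" using R sq by blast
      thus ?thesis unfolding expand .
    qed
    have nb: "norm (h v) \<le> norm v" for v
    proof -
      have "norm (h v - 0 *\<^sub>R J v) \<le> sqrt (1 + 0^2) * norm v" using R by blast
      thus ?thesis by simp
    qed
    have c0: "h v \<bullet> J v = 0" for v
    proof (rule ccontr)
      define c where "c = h v \<bullet> J v"
      define d where "d = (norm v)^2 - (norm (h v))^2"
      assume "h v \<bullet> J v \<noteq> 0"
      hence c: "c \<noteq> 0" unfolding c_def .
      define t where "t = - (\<bar>d\<bar> + 1) / (2 * c)"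
      have "- 2 * t * c \<le> d" using R2[of v t] unfolding c_def d_def by (simp add: algebra_simps)
      moreover have "- 2 * t * c = \<bar>d\<bar> + 1" unfolding t_def using c by (simp add: field_simps)
      ultimately show False by simp
    qed
    have pol: "h u \<bullet> J v + h v \<bullet> J u = 0" for u v
    proof -
      have "h (u + v) \<bullet> J (u + v) = 0" by (rule c0)
      thus ?thesis using c0[of u] c0[of v] by (simp add: h.add J.add inner_add)
    qed
    have sym: "h u \<bullet> v = u \<bullet> h v" for u v
    proof -
      have "h u \<bullet> J (J v) + h (J v) \<bullet> J u = 0" by (rule pol)
      hence "- (h u \<bullet> v) + J (h v) \<bullet> J u = 0" by (simp add: JJ hJ)
      thus ?thesis by (simp add: Jo inner_commute)
    qed
    show "(\<forall>u v. h u \<bullet> v = u \<bullet> h v) \<and> (\<forall>v. norm (h v) \<le> norm v)" using sym nb by blast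
  qed
qed


lemma adjoint_prop:
  fixes f :: "'h::{real_inner,complete_space} \<Rightarrow> 'h"
  assumes "bounded_linear f"
  shows "f x \<bullet> y = x \<bullet> adjoint f y"
proof -
  have "\<forall>y. \<exists>z. \<forall>x. f x \<bullet> y = x \<bullet> z"
  proof
    fix y
    have "bounded_linear (\<lambda>x. f x \<bullet> y)"
      using bounded_linear_compose[OF bounded_linear_inner_left assms] .
    thus "\<exists>z. \<forall>x. f x \<bullet> y = x \<bullet> z" by (rule riesz)
  qed
  then obtain g where g: "\<forall>y x. f x \<bullet> y = x \<bullet> g y" by metis
  have "adjoint f = g" by (rule adjoint_unique) (use g in blast)
  thus ?thesis using g by simp
qed

lemma onorm_le_iff:
  assumes "bounded_linear f" "0 \<le> b"
  shows "onorm f \<le> b \<longleftrightarrow> (\<forall>v. norm (f v) \<le> b * norm v)"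
proof
  assume "onorm f \<le> b"
  thus "\<forall>v. norm (f v) \<le> b * norm v"
    using onorm[OF assms(1)] by (meson mult_right_mono norm_ge_zero order_trans)
next
  assume "\<forall>v. norm (f v) \<le> b * norm v"
  thus "onorm f \<le> b" using onorm_bound[OF assms(2)] by blast
qed

theorem lemma2:
  fixes J e w x :: "'h::{real_inner, complete_space} \<Rightarrow> 'h"
  assumes "complex_structure J"
    and "grading_op J e"
    and "w \<in> cstar_one_eps J e"
    and "unitary_op J w"
    and "bounded_op J x"
  shows "(omega_hermitian w x \<and> onorm x \<le> 1) \<longleftrightarrow>
    (\<forall>t::real. onorm (\<lambda>v. x v - cscale J (\<i> * complex_of_real t) (w v)) \<le> sqrt (1 + t\<^sup>2))"
proof -
  have bJ: "bounded_linear J" and JJ: "\<And>v. J (J v) = - v" and Jo: "\<And>u v. J u \<bullet> J v = u \<bullet> v"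
    using assms(1) unfolding complex_structure_def by auto
  have bw: "bounded_linear w" and wJ: "\<And>v. w (J v) = J (w v)"
    and wW0: "adjoint w \<circ> w = id" and Ww0: "w \<circ> adjoint w = id"
    using assms(4) unfolding unitary_op_def bounded_op_def by auto
  have bx: "bounded_linear x" and xJ: "\<And>v. x (J v) = J (x v)"
    using assms(5) unfolding bounded_op_def by auto
  interpret J: bounded_linear J by fact
  interpret w: bounded_linear w by fact
  interpret x: bounded_linear x by fact
  define W where "W = adjoint w"
  have Wp: "w u \<bullet> v = u \<bullet> W v" for u v unfolding W_def by (rule adjoint_prop[OF bw])
  have Ww: "W (w v) = v" for v using wW0 unfolding W_def by (metis comp_apply id_apply)
  have wW: "w (W v) = v" for v using Ww0 unfolding W_def by (metis comp_apply id_apply)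
  have nw: "norm (w v) = norm v" for v
  proof -
    have "w v \<bullet> w v = v \<bullet> v" by (simp add: Wp Ww)
    thus ?thesis by (simp add: norm_eq_sqrt_inner)
  qed
  have Wadd: "W (a + b) = W a + W b" for a b
  proof -
    have "W (a + b) = W (w (W a) + w (W b))" by (simp add: wW)
    also have "\<dots> = W (w (W a + W b))" by (simp add: w.add)
    finally show ?thesis by (simp add: Ww)
  qed
  have Wscale: "W (r *\<^sub>R a) = r *\<^sub>R W a" for r a
  proof -
    have "W (r *\<^sub>R a) = W (r *\<^sub>R w (W a))" by (simp add: wW)
    also have "\<dots> = W (w (r *\<^sub>R W a))" by (simp add: w.scale)
    finally show ?thesis by (simp add: Ww)
  qed
  have nW: "norm (W a) = norm a" for a by (metis nw wW)
  have bW: "bounded_linear W"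
    by (rule bounded_linear_intro[where K=1]) (simp_all add: Wadd Wscale nW)
  define h where "h v = W (x v)" for v
  have bh: "bounded_linear h" unfolding h_def using bounded_linear_compose[OF bW bx] .
  have xh: "x v = w (h v)" for v unfolding h_def by (simp add: wW)
  have hJ: "h (J v) = J (h v)" for v
  proof -
    have "h (J v) = W (J (w (h v)))" unfolding h_def by (simp add: xJ wW)
    also have "\<dots> = J (h v)" by (simp add: wJ[symmetric] Ww)
    finally show ?thesis .
  qed
  have nxh: "norm (x v) = norm (h v)" for v by (simp add: xh nw)
  define A where "A t v = x v - cscale J (\<i> * complex_of_real t) (w v)" for t v
  have Aeq: "A t v = w (h v - t *\<^sub>R J v)" for t v
    unfolding A_def cscale_def by (simp add: xh w.diff w.scale wJ)
  have bA: "bounded_linear (A t)" for t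
  proof -
    have "A t = (\<lambda>v. x v - t *\<^sub>R J (w v))" unfolding A_def cscale_def by (simp add: fun_eq_iff)
    moreover have "bounded_linear (\<lambda>v. x v - t *\<^sub>R J (w v))"
      by (intro bounded_linear_sub bx bounded_linear_compose[OF bounded_linear_scaleR_right]
          bounded_linear_compose[OF bJ bw])
    ultimately show ?thesis by simp
  qed
  have nA: "norm (A t v) = norm (h v - t *\<^sub>R J v)" for t v by (simp add: Aeq nw)
  have R: "(\<forall>t::real. onorm (A t) \<le> sqrt (1 + t\<^sup>2)) \<longleftrightarrow>
           (\<forall>t v. norm (h v - t *\<^sub>R J v) \<le> sqrt (1 + t^2) * norm v)"
    using onorm_le_iff[OF bA] by (simp add: nA)
  have L1: "onorm x \<le> 1 \<longleftrightarrow> (\<forall>v. norm (h v) \<le> norm v)"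
    using onorm_le_iff[OF bx, of 1] by (simp add: nxh)
  define X where "X = adjoint x"
  have Xp: "x u \<bullet> v = u \<bullet> X v" for u v unfolding X_def by (rule adjoint_prop[OF bx])
  have L2: "omega_hermitian w x \<longleftrightarrow> (\<forall>u v. h u \<bullet> v = u \<bullet> h v)"
  proof
    assume "omega_hermitian w x"
    hence xe: "x u = w (X (w u))" for u
      unfolding omega_hermitian_def omega_adj_def X_def by (metis comp_apply)
    have hX: "h v = X (w v)" for v unfolding h_def by (metis xe Ww)
    show "\<forall>u v. h u \<bullet> v = u \<bullet> h v"
    proof (intro allI)
      fix u v
      have "h u \<bullet> v = w v \<bullet> x u" unfolding h_def by (simp add: Wp inner_commute)
      also have "\<dots> = u \<bullet> X (w v)" by (metis Xp inner_commute)
      finally show "h u \<bullet> v = u \<bullet> h v" by (simp add: hX)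
    qed
  next
    assume S: "\<forall>u v. h u \<bullet> v = u \<bullet> h v"
    have "X (w u) = h u" for u
    proof -
      have "y \<bullet> X (w u) = y \<bullet> h u" for y
      proof -
        have "y \<bullet> X (w u) = w u \<bullet> x y" by (metis Xp inner_commute)
        also have "\<dots> = u \<bullet> h y" unfolding h_def by (simp add: Wp)
        also have "\<dots> = y \<bullet> h u" using S by (simp add: inner_commute)
        finally show ?thesis .
      qed
      thus ?thesis using vector_eq_ldot by blast
    qed
    thus "omega_hermitian w x"
      unfolding omega_hermitian_def omega_adj_def X_def[symmetric]
      by (simp add: fun_eq_iff xh)
  qed
  have C: "((\<forall>u v. h u \<bullet> v = u \<bullet> h v) \<and> (\<forall>v. norm (h v) \<le> norm v)) \<longleftrightarrow>
         (\<forall>t v. norm (h v - t *\<^sub>R J v) \<le> sqrt (1 + t^2) * norm v)"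
    by (rule core[OF J.linear_axioms JJ Jo bounded_linear.linear[OF bh] hJ])
  show ?thesis using C R L1 L2 unfolding A_def by simp
qed

end
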